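(* For all integers $1\le k\le n$, the probability (under $\mathbb{P}_n$) that the $k$-th boundary step of a type-B permutation tableau of size $n$ is a west step and the diagonal cell of the column corresponding to this step contains a $1$ equals $\dfrac12$.
   Context: A Ferrers diagram is a left-justified array of cells whose row lengths weakly decrease from top to bottom (rows of length $0$ are allowed). Its half-perimeter is the number of rows plus the number of columns. Its southeast boundary, traversed from the northeast corner to the southwest corner, consists of $n$ unit steps, each south or west; south steps correspond to rows and west steps to columns. If the diagram has $c$ columns, the shifted Ferrers diagram is obtained by inserting $c$ new left-justified rows above it, of lengths $c,c-1,\dots,1$ from top to bottom; the rightmost cell of each inserted row is a diagonal cell, and each column contains exactly one diagonal cell. A type-B permutation tableau of size $n$ is a filling of a shifted Ferrers diagram of half-perimeter $n$ with $0$'s and $1$'s such that: (1) every column contains at least one $1$; (2) no $0$ has both a $1$ above it in its column and a $1$ to its left in its row; (3) if a diagonal cell contains $0$ then every cell of its row contains $0$. Let $\mathcal{B}_n$ be the set of such tableaux and $\mathbb{P}_n$ the uniform probability measure on $\mathcal{B}_n$. *)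

theory Defs
  imports "HOL-Probability.Probability_Mass_Function"
begin

(* Steps of the southeast boundary, read from the NE corner to the SW corner. *)
datatype step = South | West

(* A type-B tableau of size n is encoded as a pair (w, T):
   - w :: step list of length n is the boundary path; step p (0-indexed) is the
     (p+1)-th step.  South steps index the rows of the Ferrers diagram, west steps
     index its columns.
   - Rows of the shifted diagram are indexed by ALL steps: a south step p is the
     original row of p, a west step p is the inserted row whose diagonal cell lies
     in the column of p.  Columns are indexed by west steps.
   - Cell (r, c) exists iff c is a west step and r \<le> c; the diagonal cell of
     column c is (c, c).  (Original row r contains column c iff r < c.)
   - T is the set of cells filled with 1 (all other cells contain 0). *)

definition tcells :: "step list \<Rightarrow> (nat \<times> nat) set" where
  "tcells w = {(r, c). c < length w \<and> w ! c = West \<and> r \<le> c}"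

(* column c' lies strictly to the left of column c: later west steps are further left *)
definition col_left :: "nat \<Rightarrow> nat \<Rightarrow> bool" where
  "col_left c' c \<longleftrightarrow> c < c'"

(* row r' lies strictly above row r: inserted rows lie above original rows;
   within the inserted rows the diagonal cell is the top cell of its column
   (rows of later west steps are higher); original rows go down along the path. *)
definition row_above :: "step list \<Rightarrow> nat \<Rightarrow> nat \<Rightarrow> bool" where
  "row_above w r' r \<longleftrightarrow>
     (w ! r' = West \<and> w ! r = South) \<or>
     (w ! r' = West \<and> w ! r = West \<and> r < r') \<or>
     (w ! r' = South \<and> w ! r = South \<and> r' < r)"

definition is_typeB_tableau :: "nat \<Rightarrow> step list \<times> (nat \<times> nat) set \<Rightarrow> bool" where
  "is_typeB_tableau n t \<longleftrightarrow>
     (let w = fst t; T = snd t in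
       length w = n \<and> T \<subseteq> tcells w \<and>
       \<comment> \<open>(1) every column contains a 1\<close>
       (\<forall>c < n. w ! c = West \<longrightarrow> (\<exists>r. (r, c) \<in> T)) \<and>
       \<comment> \<open>(2) no 0 with a 1 above it in its column and a 1 to its left in its row\<close>
       (\<forall>(r, c) \<in> tcells w. (r, c) \<notin> T \<longrightarrow>
           \<not> ((\<exists>r'. (r', c) \<in> T \<and> row_above w r' r) \<and>
              (\<exists>c'. (r, c') \<in> T \<and> col_left c' c))) \<and>
       \<comment> \<open>(3) a 0 in a diagonal cell forces its whole row to be 0\<close>
       (\<forall>c < n. w ! c = West \<longrightarrow> (c, c) \<notin> T \<longrightarrow> (\<forall>c'. (c, c') \<notin> T)))"

definition typeB_tableaux :: "nat \<Rightarrow> (step list \<times> (nat \<times> nat) set) set" where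
  "typeB_tableaux n = {t. is_typeB_tableau n t}"

definition PB :: "nat \<Rightarrow> (step list \<times> (nat \<times> nat) set) pmf" where
  "PB n = pmf_of_set (typeB_tableaux n)"

end

theory Submission
  imports Defs
begin


abbreviation valid where "valid n w T \<equiv> is_typeB_tableau n (w, T)"

lemma valid_def': "valid n w T \<longleftrightarrow>
       length w = n \<and> T \<subseteq> tcells w \<and>
       (\<forall>c < n. w ! c = West \<longrightarrow> (\<exists>r. (r, c) \<in> T)) \<and>
       (\<forall>r c. (r, c) \<in> tcells w \<longrightarrow> (r, c) \<notin> T \<longrightarrow>
           \<not> ((\<exists>r'. (r', c) \<in> T \<and> row_above w r' r) \<and>
              (\<exists>c'. (r, c') \<in> T \<and> c < c'))) \<and>
       (\<forall>c < n. w ! c = West \<longrightarrow> (c, c) \<notin> T \<longrightarrow> (\<forall>c'. (c, c') \<notin> T))"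
  unfolding is_typeB_tableau_def col_left_def Let_def fst_conv snd_conv by (intro iffI; elim conjE; intro conjI; blast)

lemma tcells_mem: "(r,c) \<in> tcells w \<longleftrightarrow> c < length w \<and> w ! c = West \<and> r \<le> c"
  by (simp add: tcells_def)

lemma tcells_append: "(r,c) \<in> tcells (w @ [x]) \<longleftrightarrow> (r,c) \<in> tcells w \<or> (c = length w \<and> x = West \<and> r \<le> c)"
  by (auto simp: tcells_mem nth_append)

lemma row_above_append: "a < length w \<Longrightarrow> b < length w \<Longrightarrow> row_above (w @ [x]) a b = row_above w a b"
  by (simp add: row_above_def nth_append)

lemma row_above_take: "a < m \<Longrightarrow> b < m \<Longrightarrow> row_above (take m w) a b = row_above w a b"
  by (simp add: row_above_def)

lemma tcells_take: "(r,c) \<in> tcells (take m w) \<longleftrightarrow> (r,c) \<in> tcells w \<and> c < m"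
  by (auto simp: tcells_mem)

definition trunc :: "nat \<Rightarrow> step list \<times> (nat \<times> nat) set \<Rightarrow> step list \<times> (nat \<times> nat) set" where
  "trunc m t = (take m (fst t), {x \<in> snd t. snd x < m})"

lemma trunc_valid:
  assumes "valid n w T" "m \<le> n"
  shows "is_typeB_tableau m (trunc m (w,T))"
proof -
  have L: "length w = n" and TT: "T \<subseteq> tcells w"
    and C1: "\<forall>c < n. w ! c = West \<longrightarrow> (\<exists>r. (r, c) \<in> T)"
    and C2: "\<forall>r c. (r, c) \<in> tcells w \<longrightarrow> (r, c) \<notin> T \<longrightarrow>
           \<not> ((\<exists>r'. (r', c) \<in> T \<and> row_above w r' r) \<and> (\<exists>c'. (r, c') \<in> T \<and> c < c'))"
    and C3: "\<forall>c < n. w ! c = West \<longrightarrow> (c, c) \<notin> T \<longrightarrow> (\<forall>c'. (c, c') \<notin> T)"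
    using assms(1) unfolding valid_def' by blast+
  let ?T = "{x \<in> T. snd x < m}"
  have "valid m (take m w) ?T"
    unfolding valid_def'
  proof (intro conjI allI impI)
    show "length (take m w) = m" using L assms(2) by simp
    show "?T \<subseteq> tcells (take m w)" using TT by (auto simp: tcells_take)
  next
    fix c assume "c < m" "take m w ! c = West"
    then show "\<exists>r. (r, c) \<in> ?T" using C1 assms(2) by fastforce
  next
    fix r c assume a: "(r, c) \<in> tcells (take m w)" "(r, c) \<notin> ?T"
    then have b: "(r,c) \<in> tcells w" "c < m" "(r,c) \<notin> T" "r \<le> c" by (auto simp: tcells_take tcells_mem)
    show "\<not> ((\<exists>r'. (r', c) \<in> ?T \<and> row_above (take m w) r' r) \<and> (\<exists>c'. (r, c') \<in> ?T \<and> c < c'))"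
    proof
      assume "(\<exists>r'. (r', c) \<in> ?T \<and> row_above (take m w) r' r) \<and> (\<exists>c'. (r, c') \<in> ?T \<and> c < c')"
      then obtain r' c' where "(r', c) \<in> T" "row_above (take m w) r' r" "(r, c') \<in> T" "c < c'" by auto
      moreover have "r' \<le> c" using \<open>(r', c) \<in> T\<close> TT by (auto simp: tcells_mem)
      ultimately show False using C2 b row_above_take[of r' m r w] by auto
    qed
  next
    fix c c' assume "c < m" "take m w ! c = West" "(c, c) \<notin> ?T"
    then show "(c, c') \<notin> ?T" using C3 assms(2) by auto
  qed
  then show ?thesis by (simp add: trunc_def)
qed

definition elig :: "step list \<Rightarrow> (nat \<times> nat) set \<Rightarrow> nat set" where
  "elig w T = {r. r < length w \<and> \<not> (w ! r = West \<and> (r,r) \<notin> T) \<and>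
      (\<forall>c r'. (r,c) \<in> tcells w \<longrightarrow> (r,c) \<notin> T \<longrightarrow> (r',c) \<in> T \<longrightarrow> \<not> row_above w r' r)}"

definition extW :: "step list \<Rightarrow> (nat \<times> nat) set \<Rightarrow> bool \<Rightarrow> nat set \<Rightarrow> step list \<times> (nat \<times> nat) set" where
  "extW w T d X = (w @ [West], T \<union> (X \<times> {length w}) \<union> (if d then {(length w, length w)} else {}))"

lemma valid_extS:
  assumes "valid m w T"
  shows "valid (Suc m) (w @ [South]) T"
proof -
  have L: "length w = m" and TT: "T \<subseteq> tcells w"
    and C1: "\<forall>c < m. w ! c = West \<longrightarrow> (\<exists>r. (r, c) \<in> T)"
    and C2: "\<forall>r c. (r, c) \<in> tcells w \<longrightarrow> (r, c) \<notin> T \<longrightarrow>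
           \<not> ((\<exists>r'. (r', c) \<in> T \<and> row_above w r' r) \<and> (\<exists>c'. (r, c') \<in> T \<and> c < c'))"
    and C3: "\<forall>c < m. w ! c = West \<longrightarrow> (c, c) \<notin> T \<longrightarrow> (\<forall>c'. (c, c') \<notin> T)"
    using assms(1) unfolding valid_def' by blast+
  have tc: "tcells (w @ [South]) = tcells w" using tcells_append by auto
  have nth: "c < Suc m \<Longrightarrow> (w @ [South]) ! c = West \<Longrightarrow> c < m \<and> w ! c = West" for c
    using L by (auto simp: nth_append less_Suc_eq)
  show ?thesis unfolding valid_def' tc
  proof (intro conjI allI impI)
    show "length (w @ [South]) = Suc m" using L by simp
    show "T \<subseteq> tcells w" by fact
  next
    fix c assume "c < Suc m" "(w @ [South]) ! c = West"
    then show "\<exists>r. (r, c) \<in> T" using C1 nth by blast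
  next
    fix r c assume a: "(r, c) \<in> tcells w" "(r, c) \<notin> T"
    show "\<not> ((\<exists>r'. (r', c) \<in> T \<and> row_above (w @ [South]) r' r) \<and> (\<exists>c'. (r, c') \<in> T \<and> c < c'))"
    proof
      assume "(\<exists>r'. (r', c) \<in> T \<and> row_above (w @ [South]) r' r) \<and> (\<exists>c'. (r, c') \<in> T \<and> c < c')"
      then obtain r' c' where "(r', c) \<in> T" "row_above (w @ [South]) r' r" "(r, c') \<in> T" "c < c'" by auto
      moreover have "r' \<le> c" "r \<le> c" "c < length w" using \<open>(r', c) \<in> T\<close> TT a by (auto simp: tcells_mem)
      ultimately show False using C2 a row_above_append[of r' w r South] by auto
    qed
  next
    fix c c' assume "c < Suc m" "(w @ [South]) ! c = West" "(c, c) \<notin> T"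
    then show "(c, c') \<notin> T" using C3 nth by blast
  qed
qed

lemma valid_extW:
  assumes "valid m w T" "X \<subseteq> elig w T" "d \<or> X \<noteq> {}"
  shows "is_typeB_tableau (Suc m) (extW w T d X)"
proof -
  have L: "length w = m" and TT: "T \<subseteq> tcells w"
    and C1: "\<forall>c < m. w ! c = West \<longrightarrow> (\<exists>r. (r, c) \<in> T)"
    and C2: "\<forall>r c. (r, c) \<in> tcells w \<longrightarrow> (r, c) \<notin> T \<longrightarrow>
           \<not> ((\<exists>r'. (r', c) \<in> T \<and> row_above w r' r) \<and> (\<exists>c'. (r, c') \<in> T \<and> c < c'))"
    and C3: "\<forall>c < m. w ! c = West \<longrightarrow> (c, c) \<notin> T \<longrightarrow> (\<forall>c'. (c, c') \<notin> T)"
    using assms(1) unfolding valid_def' by blast+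
  define T1 where "T1 = T \<union> (X \<times> {m}) \<union> (if d then {(m, m)} else {})"
  have ext: "extW w T d X = (w @ [West], T1)" using L by (simp add: extW_def T1_def)
  have Tc: "(r,c) \<in> T \<Longrightarrow> r \<le> c \<and> c < m \<and> w ! c = West" for r c using TT L by (auto simp: tcells_mem)
  have Xe: "x \<in> X \<Longrightarrow> x < m \<and> \<not> (w ! x = West \<and> (x,x) \<notin> T) \<and>
      (\<forall>c r'. (x,c) \<in> tcells w \<longrightarrow> (x,c) \<notin> T \<longrightarrow> (r',c) \<in> T \<longrightarrow> \<not> row_above w r' x)" for x
    using assms(2) L unfolding elig_def by blast
  have T1m: "(r,c) \<in> T1 \<longleftrightarrow> (if c < m then (r,c) \<in> T else c = m \<and> (r \<in> X \<or> (d \<and> r = m)))" for r c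
    using Tc Xe unfolding T1_def by (cases "c < m") auto
  have nth: "c < m \<Longrightarrow> (w @ [West]) ! c = w ! c" for c using L by (simp add: nth_append)
  have tc: "(r,c) \<in> tcells (w @ [West]) \<longleftrightarrow> (if c < m then (r,c) \<in> tcells w else c = m \<and> r \<le> m)" for r c
    using L by (auto simp: tcells_append tcells_mem nth_append)
  have "valid (Suc m) (w @ [West]) T1"
    unfolding valid_def'
  proof (intro conjI allI impI)
    show "length (w @ [West]) = Suc m" using L by simp
    show "T1 \<subseteq> tcells (w @ [West])"
    proof
      fix x assume "x \<in> T1"
      obtain a b where x: "x = (a,b)" by (cases x)
      have "(a,b) \<in> T1" using \<open>x \<in> T1\<close> x by simp
      then have "(a,b) \<in> tcells (w @ [West])"
        unfolding tc T1m using Xe TT by (cases "b < m") (auto simp: tcells_mem, fastforce)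
      then show "x \<in> tcells (w @ [West])" using x by simp
    qed
  next
    fix c assume "c < Suc m" "(w @ [West]) ! c = West"
    then show "\<exists>r. (r, c) \<in> T1"
    proof (cases "c < m")
      case True then show ?thesis using C1 \<open>(w @ [West]) ! c = West\<close> nth T1m by auto
    next
      case False then have "c = m" using \<open>c < Suc m\<close> by simp
      then show ?thesis using assms(3) T1m by auto
    qed
  next
    fix r c assume a: "(r, c) \<in> tcells (w @ [West])" "(r, c) \<notin> T1"
    show "\<not> ((\<exists>r'. (r', c) \<in> T1 \<and> row_above (w @ [West]) r' r) \<and> (\<exists>c'. (r, c') \<in> T1 \<and> c < c'))"
    proof
      assume "(\<exists>r'. (r', c) \<in> T1 \<and> row_above (w @ [West]) r' r) \<and> (\<exists>c'. (r, c') \<in> T1 \<and> c < c')"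
      then obtain r' c' where h: "(r', c) \<in> T1" "row_above (w @ [West]) r' r" "(r, c') \<in> T1" "c < c'" by auto
      have "c < m"
      proof (rule ccontr)
        assume "\<not> c < m" then have "c' > m" using h(4) tc a by auto
        then show False using h(3) T1m by auto
      qed
      then have c: "(r,c) \<in> tcells w" "(r,c) \<notin> T" "(r',c) \<in> T" "r \<le> c" using a h T1m tc by (auto simp: tcells_mem)
      then have ra: "row_above w r' r" using h(2) row_above_append[of r' w r West] Tc[of r' c] L \<open>c < m\<close> by auto
      show False
      proof (cases "c' < m")
        case True then show ?thesis using C2 c ra h T1m by auto
      next
        case False
        then have "r \<in> X" using h(3) T1m \<open>c < m\<close> c(4) by auto
        then show ?thesis using Xe c ra by blast
      qed
    qed
  next
    fix c c' assume a: "c < Suc m" "(w @ [West]) ! c = West" "(c, c) \<notin> T1"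
    show "(c, c') \<notin> T1"
    proof (cases "c < m")
      case True
      then have "w ! c = West" "(c,c) \<notin> T" using a nth T1m by auto
      then have "c \<notin> X" using Xe by blast
      then show ?thesis using C3 True \<open>w ! c = West\<close> \<open>(c,c) \<notin> T\<close> T1m by auto
    next
      case False then have "c = m" using a by simp
      then show ?thesis using a T1m Xe Tc[of m c'] by auto
    qed
  qed
  then show ?thesis using ext by simp
qed



definition ext1 :: "step list \<Rightarrow> (nat \<times> nat) set \<Rightarrow> (step list \<times> (nat \<times> nat) set) set" where
  "ext1 w T = insert (w @ [South], T) (extW w T True ` Pow (elig w T) \<union> extW w T False ` (Pow (elig w T) - {{}}))"

lemma valid_T: "valid m w T \<Longrightarrow> (r,c) \<in> T \<Longrightarrow> r \<le> c \<and> c < m \<and> w ! c = West"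
proof -
  assume v: "valid m w T" and rc: "(r,c) \<in> T"
  have "T \<subseteq> tcells w" "length w = m" using v unfolding valid_def' by blast+
  then have "(r,c) \<in> tcells w" "length w = m" using rc by blast+
  then show ?thesis unfolding tcells_mem by simp
qed

lemma valid_len: "valid m w T \<Longrightarrow> length w = m"
  unfolding valid_def' by blast

lemma elig_less: "r \<in> elig w T \<Longrightarrow> r < length w"
  by (simp add: elig_def)

lemma valid_Tsub: "valid m w T \<Longrightarrow> {x \<in> T. snd x < m} = T"
proof -
  assume v: "valid m w T"
  have "x \<in> T \<Longrightarrow> snd x < m" for x using valid_T[OF v, of "fst x" "snd x"] by simp
  then show ?thesis by blast
qed

lemma trunc_extS: "valid m w T \<Longrightarrow> trunc m (w @ [South], T) = (w, T)"
  unfolding trunc_def using valid_Tsub[of m w T] valid_len[of m w T] by simp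

lemma trunc_extW: "valid m w T \<Longrightarrow> X \<subseteq> elig w T \<Longrightarrow> trunc m (extW w T d X) = (w, T)"
proof -
  assume v: "valid m w T" and X: "X \<subseteq> elig w T"
  have L: "length w = m" using valid_len[OF v] .
  have A: "{x \<in> T \<union> (X \<times> {m}) \<union> (if d then {(m, m)} else {}). snd x < m} = T"
  proof
    show "{x \<in> T \<union> (X \<times> {m}) \<union> (if d then {(m, m)} else {}). snd x < m} \<subseteq> T"
      by (cases d) auto
    show "T \<subseteq> {x \<in> T \<union> (X \<times> {m}) \<union> (if d then {(m, m)} else {}). snd x < m}"
      using valid_Tsub[OF v] by blast
  qed
  have B: "take m (w @ [West]) = w" using L by simp
  have "trunc m (extW w T d X) = (take m (w @ [West]), {x \<in> T \<union> (X \<times> {m}) \<union> (if d then {(m, m)} else {}). snd x < m})"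
    unfolding trunc_def extW_def L by simp
  then show ?thesis using A B by simp
qed

lemma ext1_cases:
  assumes "t \<in> ext1 w T"
  obtains "t = (w @ [South], T)" | d X where "t = extW w T d X" "X \<subseteq> elig w T" "d \<or> X \<noteq> {}"
proof -
  consider "t = (w @ [South], T)" | "t \<in> extW w T True ` Pow (elig w T)" | "t \<in> extW w T False ` (Pow (elig w T) - {{}})"
    using assms unfolding ext1_def by blast
  then show ?thesis
  proof cases
    case 1 then show ?thesis using that(1) by blast
  next
    case 2
    then obtain X where "X \<in> Pow (elig w T)" "t = extW w T True X" by blast
    then show ?thesis using that(2)[of True X] by blast
  next
    case 3
    then obtain X where "X \<in> Pow (elig w T) - {{}}" "t = extW w T False X" by blast
    then show ?thesis using that(2)[of False X] by blast
  qed
qed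

lemma ext1_sub: "valid m w T \<Longrightarrow> t \<in> ext1 w T \<Longrightarrow> is_typeB_tableau (Suc m) t \<and> trunc m t = (w,T)"
proof -
  assume v: "valid m w T" and t: "t \<in> ext1 w T"
  from t show ?thesis
  proof (cases rule: ext1_cases)
    case 1 then show ?thesis using valid_extS[OF v] trunc_extS[OF v] by simp
  next
    case (2 d X)
    have "is_typeB_tableau (Suc m) (extW w T d X)" using valid_extW[OF v 2(2,3)] .
    moreover have "trunc m (extW w T d X) = (w, T)" using trunc_extW[OF v 2(2)] .
    ultimately show ?thesis using 2(1) by simp
  qed
qed

lemma ext1_complete:
  assumes "valid m w T" "is_typeB_tableau (Suc m) t" "trunc m t = (w,T)"
  shows "t \<in> ext1 w T"
proof -
  obtain w1 T1 where t: "t = (w1, T1)" by (cases t)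
  have v1: "valid (Suc m) w1 T1" using assms t by simp
  have L1: "length w1 = Suc m" using v1 valid_def' by blast
  have L: "length w = m" using assms(1) valid_def' by blast
  have tw: "take m w1 = w" and tT: "{x \<in> T1. snd x < m} = T" using assms(3) t by (auto simp: trunc_def)
  obtain a where w1: "w1 = w @ [a]" using take_Suc_conv_app_nth[of m w1] L1 tw by auto
  have v1': "valid (Suc m) (w @ [a]) T1" using v1 w1 by simp
  have T1c: "(r,c) \<in> T1 \<Longrightarrow> r \<le> c \<and> c < Suc m \<and> (w @ [a]) ! c = West" for r c using valid_T[OF v1'] by blast
  have C2: "\<forall>r c. (r, c) \<in> tcells (w @ [a]) \<longrightarrow> (r, c) \<notin> T1 \<longrightarrow>
           \<not> ((\<exists>r'. (r', c) \<in> T1 \<and> row_above (w @ [a]) r' r) \<and> (\<exists>c'. (r, c') \<in> T1 \<and> c < c'))"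
    and C1: "\<forall>c < Suc m. (w @ [a]) ! c = West \<longrightarrow> (\<exists>r. (r, c) \<in> T1)"
    and C3: "\<forall>c < Suc m. (w @ [a]) ! c = West \<longrightarrow> (c, c) \<notin> T1 \<longrightarrow> (\<forall>c'. (c, c') \<notin> T1)"
    using v1' unfolding valid_def' by blast+
  have am: "(w @ [a]) ! m = a" using L by (simp add: nth_append)
  show ?thesis
  proof (cases a)
    case South
    have "x \<in> T1 \<Longrightarrow> snd x < m" for x using T1c[of "fst x" "snd x"] South am by (cases "snd x = m") auto
    then have "T1 = T" using tT by auto
    then show ?thesis using t w1 South by (simp add: ext1_def)
  next
    case West
    define X where "X = {r. r < m \<and> (r, m) \<in> T1}"
    define d where "d = ((m,m) \<in> T1)"
    have T1eq: "T1 = T \<union> (X \<times> {m}) \<union> (if d then {(m, m)} else {})"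
    proof -
      have "(r,c) \<in> T1 \<longleftrightarrow> (r,c) \<in> T \<union> (X \<times> {m}) \<union> (if d then {(m, m)} else {})" for r c
      proof
        assume "(r,c) \<in> T1"
        then show "(r,c) \<in> T \<union> (X \<times> {m}) \<union> (if d then {(m, m)} else {})"
        proof -
          have "c < m \<or> c = m" "r \<le> c" using T1c[of r c] \<open>(r,c) \<in> T1\<close> by auto
          then show ?thesis using tT \<open>(r,c) \<in> T1\<close> unfolding X_def d_def by auto
        qed
      next
        assume "(r,c) \<in> T \<union> (X \<times> {m}) \<union> (if d then {(m, m)} else {})"
        then show "(r,c) \<in> T1" using tT unfolding X_def d_def by (cases "(m,m) \<in> T1") auto
      qed
      then show ?thesis by auto
    qed
    have Xe: "X \<subseteq> elig w T"
    proof
      fix r assume "r \<in> X"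
      then have r: "r < m" "(r,m) \<in> T1" by (auto simp: X_def)
      have wr: "(w @ [a]) ! r = w ! r" using r L by (simp add: nth_append)
      have "\<not> (w ! r = West \<and> (r,r) \<notin> T)"
        using C3 r wr tT by auto
      moreover have "\<forall>c r'. (r,c) \<in> tcells w \<longrightarrow> (r,c) \<notin> T \<longrightarrow> (r',c) \<in> T \<longrightarrow> \<not> row_above w r' r"
      proof (intro allI impI notI)
        fix c r' assume a: "(r,c) \<in> tcells w" "(r,c) \<notin> T" "(r',c) \<in> T" "row_above w r' r"
        have "c < m" "r' \<le> c" using a(1,3) valid_T[OF assms(1)] L by (auto simp: tcells_mem)
        have "(r,c) \<in> tcells (w @ [a])" using a(1) by (simp add: tcells_append)
        moreover have "(r,c) \<notin> T1" using a(2) tT \<open>c < m\<close> by auto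
        moreover have "(r',c) \<in> T1" using a(3) tT by auto
        moreover have "row_above (w @ [a]) r' r" using a(4) row_above_append[of r' w r a] \<open>c < m\<close> \<open>r' \<le> c\<close> r L
          by simp
        ultimately show False using C2 r(2) \<open>c < m\<close> by blast
      qed
      ultimately show "r \<in> elig w T" using r L by (simp add: elig_def)
    qed
    have "d \<or> X \<noteq> {}"
    proof -
      obtain r where "(r,m) \<in> T1" using C1 West am by auto
      then show ?thesis using T1c[of r m] unfolding X_def d_def by (cases "r = m") auto
    qed
    have "t = extW w T d X" using t w1 West T1eq L by (simp add: extW_def)
    show ?thesis
    proof (cases d)
      case True
      then have "t \<in> extW w T True ` Pow (elig w T)" using \<open>t = extW w T d X\<close> Xe by simp
      then show ?thesis unfolding ext1_def by blast
    next
      case False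
      then have "X \<noteq> {}" using \<open>d \<or> X \<noteq> {}\<close> by blast
      then have "X \<in> Pow (elig w T) - {{}}" using Xe by blast
      then have "t \<in> extW w T False ` (Pow (elig w T) - {{}})" using \<open>t = extW w T d X\<close> False by simp
      then show ?thesis unfolding ext1_def by blast
    qed
  qed
qed



lemma trunc_trunc: "m \<le> m' \<Longrightarrow> trunc m (trunc m' t) = trunc m t"
  unfolding trunc_def by (auto simp: min_def)

lemma trunc_id: "valid m w T \<Longrightarrow> trunc m (w, T) = (w, T)"
  unfolding trunc_def using valid_Tsub[of m w T] valid_len[of m w T] by simp

lemma elig_gen:
  assumes v: "valid m w T" and v1: "valid (Suc m) (w @ [a]) T1" and sub: "{x \<in> T1. snd x < m} = T"
    and r: "r < m"
  shows "r \<in> elig (w @ [a]) T1 \<longleftrightarrow> r \<in> elig w T \<and>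
     (a = West \<longrightarrow> (r, m) \<in> T1 \<or> (\<forall>r'. (r', m) \<in> T1 \<longrightarrow> \<not> row_above (w @ [a]) r' r))"
proof -
  have L: "length w = m" using valid_len[OF v] .
  have nth: "(w @ [a]) ! r = w ! r" using r L by (simp add: nth_append)
  have rr: "(r, r) \<in> T1 \<longleftrightarrow> (r, r) \<in> T" using sub r by auto
  have T1c: "(x,c) \<in> T1 \<Longrightarrow> x \<le> c \<and> c < Suc m" for x c using valid_T[OF v1] by blast
  have Tin: "c < m \<Longrightarrow> (x,c) \<in> T1 \<longleftrightarrow> (x,c) \<in> T" for x c using sub by auto
  have tc: "(r,c) \<in> tcells (w @ [a]) \<longleftrightarrow> (r,c) \<in> tcells w \<or> (c = m \<and> a = West)" for c
    using tcells_append[of r c w a] r L by auto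
  have ra: "c < m \<Longrightarrow> (x,c) \<in> T \<Longrightarrow> row_above (w @ [a]) x r \<longleftrightarrow> row_above w x r" for x c
    using row_above_append[of x w r a] valid_T[OF v] r L by fastforce
  have tcm: "(r,c) \<in> tcells w \<Longrightarrow> c < m" for c using L by (simp add: tcells_mem)
  define old where "old = (\<forall>c r'. (r,c) \<in> tcells w \<longrightarrow> (r,c) \<notin> T \<longrightarrow> (r',c) \<in> T \<longrightarrow> \<not> row_above w r' r)"
  define new where "new = (\<forall>c r'. (r,c) \<in> tcells (w @ [a]) \<longrightarrow> (r,c) \<notin> T1 \<longrightarrow> (r',c) \<in> T1 \<longrightarrow> \<not> row_above (w @ [a]) r' r)"
  define cm where "cm = (a = West \<longrightarrow> (r, m) \<in> T1 \<or> (\<forall>r'. (r', m) \<in> T1 \<longrightarrow> \<not> row_above (w @ [a]) r' r))"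
  have "new \<longleftrightarrow> old \<and> cm"
  proof
    assume n: new
    have "old" unfolding old_def
    proof (intro allI impI)
      fix c r' assume h: "(r,c) \<in> tcells w" "(r,c) \<notin> T" "(r',c) \<in> T"
      have "c < m" using tcm h(1) .
      then show "\<not> row_above w r' r" using n h tc Tin ra unfolding new_def by blast
    qed
    moreover have cm unfolding cm_def
    proof (intro impI)
      assume "a = West"
      then show "(r, m) \<in> T1 \<or> (\<forall>r'. (r', m) \<in> T1 \<longrightarrow> \<not> row_above (w @ [a]) r' r)"
        using n tc unfolding new_def by blast
    qed
    ultimately show "old \<and> cm" by blast
  next
    assume oc: "old \<and> cm"
    show new unfolding new_def
    proof (intro allI impI)
      fix c r' assume h: "(r,c) \<in> tcells (w @ [a])" "(r,c) \<notin> T1" "(r',c) \<in> T1"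
      show "\<not> row_above (w @ [a]) r' r"
      proof (cases "c < m")
        case True
        then have "(r,c) \<in> tcells w" using h(1) tc by auto
        then show ?thesis using oc h True Tin ra unfolding old_def by blast
      next
        case False
        then have "c = m" "a = West" using h(1) tc tcm by auto
        then show ?thesis using oc h unfolding cm_def by blast
      qed
    qed
  qed
  moreover have "r \<in> elig (w @ [a]) T1 \<longleftrightarrow> \<not> (w ! r = West \<and> (r,r) \<notin> T) \<and> new"
    unfolding elig_def new_def using r L nth rr by simp
  moreover have "r \<in> elig w T \<longleftrightarrow> \<not> (w ! r = West \<and> (r,r) \<notin> T) \<and> old"
    unfolding elig_def old_def using r L by simp
  ultimately show ?thesis unfolding cm_def by blast
qed

lemma elig_sub: "elig w T \<subseteq> {..<length w}"
  using elig_less by blast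

lemma finite_elig: "finite (elig w T)"
  using elig_sub finite_subset by blast

lemma tcells_last_row: "length w = m \<Longrightarrow> (m, c) \<in> tcells (w @ [a]) \<Longrightarrow> c = m"
  by (simp add: tcells_mem)

lemma elig_extS:
  assumes v: "valid m w T"
  shows "elig (w @ [South]) T = insert m (elig w T)"
proof -
  have L: "length w = m" using valid_len[OF v] .
  have v1: "valid (Suc m) (w @ [South]) T" using valid_extS[OF v] .
  have sub: "{x \<in> T. snd x < m} = T" using valid_Tsub[OF v] .
  have "r \<in> elig (w @ [South]) T \<longleftrightarrow> r \<in> insert m (elig w T)" for r
  proof (cases "r < m")
    case True
    then show ?thesis using elig_gen[OF v v1 sub True] by auto
  next
    case False
    show ?thesis
    proof (cases "r = m")
      case True
      have "m \<in> elig (w @ [South]) T"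
        unfolding elig_def using L by (auto simp: tcells_mem nth_append le_less_Suc_eq)
      then show ?thesis using True by simp
    next
      case False
      then have "r > m" using \<open>\<not> r < m\<close> by simp
      then show ?thesis using elig_less[of r "w @ [South]" T] elig_less[of r w T] L by auto
    qed
  qed
  then show ?thesis by blast
qed

lemma elig_extW:
  assumes v: "valid m w T" and X: "X \<subseteq> elig w T" and dX: "d \<or> X \<noteq> {}"
  shows "elig (fst (extW w T d X)) (snd (extW w T d X)) =
    (if d then insert m X else X \<union> {r \<in> elig w T. \<forall>x\<in>X. \<not> row_above w x r})"
proof -
  have L: "length w = m" using valid_len[OF v] .
  define T1 where "T1 = T \<union> (X \<times> {m}) \<union> (if d then {(m, m)} else {})"
  have ext: "extW w T d X = (w @ [West], T1)" using L by (simp add: extW_def T1_def)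
  have v1: "valid (Suc m) (w @ [West]) T1" using valid_extW[OF v X dX] ext by simp
  have sub: "{x \<in> T1. snd x < m} = T" using trunc_extW[OF v X, of d] ext by (simp add: trunc_def)
  have Xm: "x \<in> X \<Longrightarrow> x < m" for x using X elig_less L by blast
  have Tc: "(x,c) \<in> T \<Longrightarrow> c < m" for x c using valid_T[OF v] by blast
  have T1m: "(x, m) \<in> T1 \<longleftrightarrow> x \<in> X \<or> (d \<and> x = m)" for x
    unfolding T1_def using Tc by auto
  have raX: "x \<in> X \<Longrightarrow> r < m \<Longrightarrow> row_above (w @ [West]) x r \<longleftrightarrow> row_above w x r" for x r
    using row_above_append[of x w r West] Xm L by simp
  have ram: "r < m \<Longrightarrow> row_above (w @ [West]) m r" for r
    using L by (cases "w ! r") (simp_all add: row_above_def nth_append)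
  have "r \<in> elig (w @ [West]) T1 \<longleftrightarrow>
       r \<in> (if d then insert m X else X \<union> {r \<in> elig w T. \<forall>x\<in>X. \<not> row_above w x r})" for r
  proof (cases "r < m")
    case True
    have e: "r \<in> elig (w @ [West]) T1 \<longleftrightarrow> r \<in> elig w T \<and>
      ((r, m) \<in> T1 \<or> (\<forall>r'. (r', m) \<in> T1 \<longrightarrow> \<not> row_above (w @ [West]) r' r))"
      using elig_gen[OF v v1 sub True] by simp
    show ?thesis
    proof (cases d)
      case True
      then show ?thesis using e T1m ram[OF \<open>r < m\<close>] X \<open>r < m\<close> by auto
    next
      case False
      then show ?thesis using e T1m raX[OF _ \<open>r < m\<close>] X \<open>r < m\<close> by auto
    qed
  next
    case False
    show ?thesis
    proof (cases "r = m")
      case True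
      have "m \<in> elig (w @ [West]) T1 \<longleftrightarrow> d"
      proof
        assume "m \<in> elig (w @ [West]) T1"
        then have "(m, m) \<in> T1" unfolding elig_def using L by (auto simp: nth_append)
        then show d using T1m Xm by blast
      next
        assume d
        then have "(m, m) \<in> T1" using T1m by blast
        then show "m \<in> elig (w @ [West]) T1"
          unfolding elig_def using L tcells_last_row[OF L, of _ West] by auto
      qed
      then show ?thesis using True Xm elig_less[of m w T] L by auto
    next
      case False
      then have "r > m" using \<open>\<not> r < m\<close> by simp
      have "x \<in> X \<Longrightarrow> x \<noteq> r" for x using Xm[of x] \<open>m < r\<close> by simp
      then have a1: "r \<notin> X" by blast
      have a2: "r \<notin> elig w T" using elig_less[of r w T] L \<open>r > m\<close> by auto
      have a3: "r \<notin> elig (w @ [West]) T1" using elig_less[of r "w @ [West]" T1] L \<open>r > m\<close> by auto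
      show ?thesis using a1 a2 a3 \<open>r > m\<close> by simp
    qed
  qed
  then have "elig (w @ [West]) T1 = (if d then insert m X else X \<union> {r \<in> elig w T. \<forall>x\<in>X. \<not> row_above w x r})"
    by (rule set_eqI)
  then show ?thesis using ext by simp
qed



lemma extW_col:
  assumes v: "valid m w T" and X: "X \<subseteq> elig w T"
  shows "{r. r < m \<and> (r, m) \<in> snd (extW w T d X)} = X"
    and "(m, m) \<in> snd (extW w T d X) \<longleftrightarrow> d"
proof -
  have L: "length w = m" using valid_len[OF v] .
  have Tc: "(x,c) \<in> T \<Longrightarrow> c < m" for x c using valid_T[OF v] by blast
  have Xm: "x \<in> X \<Longrightarrow> x < m" for x using X elig_less L by blast
  have s: "snd (extW w T d X) = T \<union> (X \<times> {m}) \<union> (if d then {(m, m)} else {})"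
    using L by (simp add: extW_def)
  have "(r, m) \<in> snd (extW w T d X) \<longleftrightarrow> r \<in> X \<or> (d \<and> r = m)" for r
    unfolding s using Tc[of r m] by auto
  then show "{r. r < m \<and> (r, m) \<in> snd (extW w T d X)} = X"
    and "(m, m) \<in> snd (extW w T d X) \<longleftrightarrow> d" using Xm by auto
qed

lemma extW_inj:
  assumes v: "valid m w T"
  shows "inj_on (extW w T d) (Pow (elig w T))"
proof (rule inj_onI)
  fix X Y assume X: "X \<in> Pow (elig w T)" and Y: "Y \<in> Pow (elig w T)" and e: "extW w T d X = extW w T d Y"
  have "X = {r. r < m \<and> (r, m) \<in> snd (extW w T d X)}" using extW_col(1)[OF v, of X d] X by simp
  also have "\<dots> = {r. r < m \<and> (r, m) \<in> snd (extW w T d Y)}" using e by simp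
  also have "\<dots> = Y" using extW_col(1)[OF v, of Y d] Y by simp
  finally show "X = Y" .
qed

lemma ext1_sum:
  assumes v: "valid m w T"
  shows "(\<Sum>t\<in>ext1 w T. g t) = g (w @ [South], T) + (\<Sum>X\<in>Pow (elig w T). g (extW w T True X))
           + (\<Sum>X\<in>Pow (elig w T) - {{}}. g (extW w T False X))"
proof -
  define E where "E = elig w T"
  define A where "A = extW w T True ` Pow E"
  define B where "B = extW w T False ` (Pow E - {{}})"
  have fE: "finite E" unfolding E_def by (rule finite_elig)
  have fA: "finite A" unfolding A_def using fE by simp
  have fB: "finite B" unfolding B_def using fE by simp
  have AB: "A \<inter> B = {}"
  proof -
    have "t \<in> A \<Longrightarrow> (m, m) \<in> snd t" for t unfolding A_def E_def using extW_col(2)[OF v] by auto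
    moreover have "t \<in> B \<Longrightarrow> (m, m) \<notin> snd t" for t unfolding B_def E_def using extW_col(2)[OF v] by auto
    ultimately show ?thesis by blast
  qed
  have SAB: "(w @ [South], T) \<notin> A \<union> B" unfolding A_def B_def by (auto simp: extW_def)
  have "(\<Sum>t\<in>ext1 w T. g t) = (\<Sum>t\<in>insert (w @ [South], T) (A \<union> B). g t)"
    unfolding ext1_def A_def B_def E_def by simp
  also have "\<dots> = g (w @ [South], T) + (\<Sum>t\<in>A \<union> B. g t)"
    using fA fB SAB by (simp add: sum.insert)
  also have "(\<Sum>t\<in>A \<union> B. g t) = (\<Sum>t\<in>A. g t) + (\<Sum>t\<in>B. g t)"
    using fA fB AB by (simp add: sum.union_disjoint)
  also have "(\<Sum>t\<in>A. g t) = (\<Sum>X\<in>Pow E. g (extW w T True X))"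
    unfolding A_def using sum.reindex[OF extW_inj[OF v, of True], of g] E_def by simp
  also have "(\<Sum>t\<in>B. g t) = (\<Sum>X\<in>Pow E - {{}}. g (extW w T False X))"
    unfolding B_def using sum.reindex[OF inj_on_subset[OF extW_inj[OF v, of False]], of "Pow E - {{}}" g] E_def by auto
  finally show ?thesis unfolding E_def by (simp add: add.assoc)
qed



lemma order_iso:
  fixes key :: "'a \<Rightarrow> 'b::linorder"
  assumes fin: "finite E" and inj: "inj_on key E"
  obtains h where "bij_betw h {..<card E} E"
    "\<And>i j. i < card E \<Longrightarrow> j < card E \<Longrightarrow> key (h i) < key (h j) \<longleftrightarrow> i < j"
proof -
  define K where "K = key ` E"
  define L where "L = sorted_list_of_set K"
  have fK: "finite K" using fin K_def by simp
  have cK: "card K = card E" using card_image[OF inj] K_def by simp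
  have sL: "set L = K" "distinct L" "length L = card E" "sorted_wrt (<) L"
    using fK cK unfolding L_def by auto
  have bkey: "bij_betw key E K" using inj K_def by (simp add: bij_betw_def)
  have b1: "bij_betw ((!) L) {..<card E} K" using bij_betw_nth[of L "{..<card E}" K] sL by simp
  define h where "h = (\<lambda>i. inv_into E key (L ! i))"
  have b2: "bij_betw (inv_into E key) K E" using bij_betw_inv_into[OF bkey] .
  have bh: "bij_betw h {..<card E} E" unfolding h_def using bij_betw_trans[OF b1 b2] by (simp add: comp_def)
  have kh: "i < card E \<Longrightarrow> key (h i) = L ! i" for i
  proof -
    assume "i < card E"
    then have "L ! i \<in> key ` E" using sL K_def by (metis nth_mem)
    then show ?thesis unfolding h_def by (simp add: f_inv_into_f)
  qed
  have ord: "i < card E \<Longrightarrow> j < card E \<Longrightarrow> key (h i) < key (h j) \<longleftrightarrow> i < j" for i j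
  proof -
    assume i: "i < card E" and j: "j < card E"
    show ?thesis
    proof
      assume "key (h i) < key (h j)"
      then have lt: "L ! i < L ! j" using kh i j by simp
      show "i < j"
      proof (rule ccontr)
        assume "\<not> i < j"
        then have "j < i \<or> j = i" by auto
        then show False
        proof
          assume "j < i" then have "L ! j < L ! i" using sorted_wrt_nth_less[OF sL(4)] i sL(3) by simp
          then show False using lt by simp
        next
          assume "j = i" then show False using lt by simp
        qed
      qed
    next
      assume "i < j"
      then have "L ! i < L ! j" using sorted_wrt_nth_less[OF sL(4)] j sL(3) by simp
      then show "key (h i) < key (h j)" using kh i j by simp
    qed
  qed
  show ?thesis using that bh ord by blast
qed

definition rkey :: "step list \<Rightarrow> nat \<Rightarrow> int" where
  "rkey w r = (if w ! r = West then - int r - 1 else int r)"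

lemma row_above_rkey: "row_above w a b \<longleftrightarrow> rkey w a < rkey w b"
  by (cases "w ! a"; cases "w ! b") (auto simp: row_above_def rkey_def)

lemma rkey_inj: "inj_on (rkey w) A"
proof (rule inj_onI)
  fix a b assume "rkey w a = rkey w b"
  then show "a = b" by (cases "w ! a"; cases "w ! b") (auto simp: rkey_def)
qed

fun N :: "nat \<Rightarrow> nat \<Rightarrow> nat" where
  "N 0 u = 1"
| "N (Suc j) u = N j (Suc u) + (\<Sum>Y\<in>Pow {..<u}. N j (Suc (card Y)))
     + (\<Sum>Y\<in>Pow {..<u} - {{}}. N j (card Y + Min Y))"

lemma card_down:
  assumes "Y \<subseteq> {..<u}" "Y \<noteq> {}"
  shows "card (Y \<union> {i. i < u \<and> (\<forall>y\<in>Y. \<not> y < i)}) = card Y + Min Y"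
proof -
  have fY: "finite Y" using assms(1) finite_subset by blast
  have MY: "Min Y \<in> Y" using Min_in[OF fY assms(2)] .
  have "Min Y < u" using MY assms(1) by auto
  have "{i. i < u \<and> (\<forall>y\<in>Y. \<not> y < i)} = {..Min Y}"
  proof (rule set_eqI)
    fix i
    show "i \<in> {i. i < u \<and> (\<forall>y\<in>Y. \<not> y < i)} \<longleftrightarrow> i \<in> {..Min Y}"
    proof
      assume "i \<in> {i. i < u \<and> (\<forall>y\<in>Y. \<not> y < i)}"
      then have "\<not> Min Y < i" using MY by blast
      then show "i \<in> {..Min Y}" by simp
    next
      assume "i \<in> {..Min Y}"
      then have "i \<le> Min Y" by simp
      moreover have "\<forall>y\<in>Y. Min Y \<le> y" using Min_le[OF fY] by blast
      ultimately show "i \<in> {i. i < u \<and> (\<forall>y\<in>Y. \<not> y < i)}" using \<open>Min Y < u\<close> by fastforce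
    qed
  qed
  moreover have "Y \<union> {..Min Y} = Y \<union> {..<Min Y}"
  proof -
    have "{..Min Y} = insert (Min Y) {..<Min Y}" by auto
    then show ?thesis using MY by auto
  qed
  ultimately have eq: "Y \<union> {i. i < u \<and> (\<forall>y\<in>Y. \<not> y < i)} = Y \<union> {..<Min Y}" by simp
  have "Y \<inter> {..<Min Y} = {}"
  proof -
    have "y \<in> Y \<Longrightarrow> \<not> y < Min Y" for y using Min_le[OF fY, of y] by simp
    then show ?thesis by auto
  qed
  then show ?thesis unfolding eq using fY card_Un_disjoint[of Y "{..<Min Y}"] by simp
qed

lemma transfer_sums:
  assumes v: "valid m w T"
  defines "E \<equiv> elig w T"
  shows "(\<Sum>X\<in>Pow E. f (Suc (card X))) = (\<Sum>Y\<in>Pow {..<card E}. f (Suc (card Y)))"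
    and "(\<Sum>X\<in>Pow E - {{}}. f (card (X \<union> {r \<in> E. \<forall>x\<in>X. \<not> row_above w x r})))
         = (\<Sum>Y\<in>Pow {..<card E} - {{}}. f (card Y + Min Y))"
proof -
  have fE: "finite E" unfolding E_def by (rule finite_elig)
  obtain h where bh: "bij_betw h {..<card E} E"
    and ord: "\<And>i j. i < card E \<Longrightarrow> j < card E \<Longrightarrow> rkey w (h i) < rkey w (h j) \<longleftrightarrow> i < j"
    using order_iso[OF fE rkey_inj] by blast
  define u where "u = card E"
  have injh: "inj_on h {..<u}" using bh u_def by (simp add: bij_betw_def)
  have imh: "h ` {..<u} = E" using bh u_def by (simp add: bij_betw_def)
  have PowE: "Pow E = image h ` Pow {..<u}" using image_Pow_surj[OF imh] by simp
  have injP: "inj_on (image h) (Pow {..<u})" using inj_on_image_Pow[OF injh] .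
  have cardh: "Y \<subseteq> {..<u} \<Longrightarrow> card (h ` Y) = card Y" for Y
    by (rule card_image[OF inj_on_subset[OF injh]])
  show "(\<Sum>X\<in>Pow E. f (Suc (card X))) = (\<Sum>Y\<in>Pow {..<card E}. f (Suc (card Y)))"
    unfolding PowE sum.reindex[OF injP] u_def[symmetric] by (intro sum.cong refl) (simp add: cardh)
  have PowE': "Pow E - {{}} = image h ` (Pow {..<u} - {{}})"
    unfolding PowE using inj_on_image_set_diff[OF injP, of "Pow {..<u}" "{{}}"] by simp
  have injP': "inj_on (image h) (Pow {..<u} - {{}})" by (rule inj_on_subset[OF injP]) blast
  have key: "card (h ` Y \<union> {r \<in> E. \<forall>y\<in>Y. \<not> row_above w (h y) r}) = card Y + Min Y"
    if Y: "Y \<subseteq> {..<u}" "Y \<noteq> {}" for Y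
  proof -
    have "{r \<in> E. \<forall>x\<in>h ` Y. \<not> row_above w x r} = h ` {i. i < u \<and> (\<forall>y\<in>Y. \<not> y < i)}"
    proof
      show "{r \<in> E. \<forall>x\<in>h ` Y. \<not> row_above w x r} \<subseteq> h ` {i. i < u \<and> (\<forall>y\<in>Y. \<not> y < i)}"
      proof
        fix r assume r: "r \<in> {r \<in> E. \<forall>x\<in>h ` Y. \<not> row_above w x r}"
        then have "r \<in> h ` {..<u}" using imh by simp
        then obtain i where i: "i < u" "r = h i" by blast
        have "\<forall>y\<in>Y. \<not> y < i"
        proof
          fix y assume "y \<in> Y"
          then have "\<not> row_above w (h y) (h i)" using r i by auto
          then show "\<not> y < i" using ord[of y i] \<open>y \<in> Y\<close> Y(1) i u_def row_above_rkey by auto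
        qed
        then show "r \<in> h ` {i. i < u \<and> (\<forall>y\<in>Y. \<not> y < i)}" using i by blast
      qed
    next
      show "h ` {i. i < u \<and> (\<forall>y\<in>Y. \<not> y < i)} \<subseteq> {r \<in> E. \<forall>x\<in>h ` Y. \<not> row_above w x r}"
      proof
        fix r assume "r \<in> h ` {i. i < u \<and> (\<forall>y\<in>Y. \<not> y < i)}"
        then obtain i where i: "i < u" "\<forall>y\<in>Y. \<not> y < i" "r = h i" by blast
        have "r \<in> E" using i imh by blast
        moreover have "\<forall>x\<in>h ` Y. \<not> row_above w x r"
        proof
          fix x assume "x \<in> h ` Y"
          then obtain y where "y \<in> Y" "x = h y" by blast
          then show "\<not> row_above w x r" using ord[of y i] Y(1) i u_def row_above_rkey by auto
        qed
        ultimately show "r \<in> {r \<in> E. \<forall>x\<in>h ` Y. \<not> row_above w x r}" by blast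
      qed
    qed
    then have "h ` Y \<union> {r \<in> E. \<forall>x\<in>h ` Y. \<not> row_above w x r} = h ` (Y \<union> {i. i < u \<and> (\<forall>y\<in>Y. \<not> y < i)})"
      by (simp add: image_Un)
    moreover have "Y \<union> {i. i < u \<and> (\<forall>y\<in>Y. \<not> y < i)} \<subseteq> {..<u}" using Y by auto
    ultimately show ?thesis using cardh card_down[OF Y] by simp
  qed
  show "(\<Sum>X\<in>Pow E - {{}}. f (card (X \<union> {r \<in> E. \<forall>x\<in>X. \<not> row_above w x r})))
         = (\<Sum>Y\<in>Pow {..<card E} - {{}}. f (card Y + Min Y))"
    unfolding PowE' sum.reindex[OF injP'] u_def[symmetric] by (intro sum.cong refl) (simp add: key)
qed



lemma ident:
  fixes f :: "nat \<Rightarrow> nat"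
  shows "(\<Sum>Y\<in>Pow {..<u}. f (Suc (card Y))) = f (Suc u) + (\<Sum>Y\<in>Pow {..<u} - {{}}. f (card Y + Min Y))"
proof (induction u arbitrary: f)
  case 0
  show ?case by simp
next
  case (Suc u)
  define P where "P = Pow {..<u}"
  have fP: "finite P" unfolding P_def by simp
  have fin: "Y \<in> P \<Longrightarrow> finite Y" for Y unfolding P_def using finite_subset by blast
  have un: "Y \<in> P \<Longrightarrow> u \<notin> Y" for Y unfolding P_def by auto
  have PS: "Pow {..<Suc u} = P \<union> insert u ` P" unfolding P_def lessThan_Suc Pow_insert by simp
  have disj: "P \<inter> insert u ` P = {}" using un by auto
  have inj: "inj_on (insert u) P"
  proof (rule inj_onI)
    fix A B assume "A \<in> P" "B \<in> P" "insert u A = insert u B"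
    then show "A = B" using un by (metis insert_ident)
  qed
  have fI: "finite (insert u ` P)" using fP by simp
  have cins: "Y \<in> P \<Longrightarrow> card (insert u Y) = Suc (card Y)" for Y using fin un by simp
  have mins: "Y \<in> P \<Longrightarrow> Y \<noteq> {} \<Longrightarrow> Min (insert u Y) = Min Y" for Y
  proof -
    assume Y: "Y \<in> P" "Y \<noteq> {}"
    have "Min Y \<in> Y" using Min_in[OF fin[OF Y(1)] Y(2)] .
    then have "Min Y < u" using Y(1) unfolding P_def by auto
    then show ?thesis using Min_insert[OF fin[OF Y(1)] Y(2)] by simp
  qed
  have e0: "{} \<in> P" unfolding P_def by simp
  have LHS: "(\<Sum>Y\<in>Pow {..<Suc u}. f (Suc (card Y))) =
      (\<Sum>Y\<in>P. f (Suc (card Y))) + (\<Sum>Y\<in>P. f (Suc (Suc (card Y))))"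
  proof -
    have "(\<Sum>Y\<in>Pow {..<Suc u}. f (Suc (card Y))) = (\<Sum>Y\<in>P. f (Suc (card Y))) + (\<Sum>Y\<in>insert u ` P. f (Suc (card Y)))"
      unfolding PS using sum.union_disjoint[OF fP fI disj] by simp
    also have "(\<Sum>Y\<in>insert u ` P. f (Suc (card Y))) = (\<Sum>Y\<in>P. f (Suc (card (insert u Y))))"
      using sum.reindex[OF inj] by simp
    also have "\<dots> = (\<Sum>Y\<in>P. f (Suc (Suc (card Y))))" using cins by (intro sum.cong) simp_all
    finally show ?thesis .
  qed
  have PS': "Pow {..<Suc u} - {{}} = (P - {{}}) \<union> insert u ` P" unfolding PS by auto
  have disj': "(P - {{}}) \<inter> insert u ` P = {}" using disj by auto
  have RHS: "(\<Sum>Y\<in>Pow {..<Suc u} - {{}}. f (card Y + Min Y)) =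
      (\<Sum>Y\<in>P - {{}}. f (card Y + Min Y)) + (f (Suc u) + (\<Sum>Y\<in>P - {{}}. f (Suc (card Y + Min Y))))"
  proof -
    have "(\<Sum>Y\<in>Pow {..<Suc u} - {{}}. f (card Y + Min Y)) =
        (\<Sum>Y\<in>P - {{}}. f (card Y + Min Y)) + (\<Sum>Y\<in>insert u ` P. f (card Y + Min Y))"
      unfolding PS' using sum.union_disjoint[OF _ fI disj'] fP by simp
    also have "(\<Sum>Y\<in>insert u ` P. f (card Y + Min Y)) = (\<Sum>Y\<in>P. f (card (insert u Y) + Min (insert u Y)))"
      using sum.reindex[OF inj] by simp
    also have "\<dots> = f (card (insert u {}) + Min (insert u {})) + (\<Sum>Y\<in>P - {{}}. f (card (insert u Y) + Min (insert u Y)))"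
      using sum.remove[OF fP e0, of "\<lambda>Y. f (card (insert u Y) + Min (insert u Y))"] by simp
    also have "(\<Sum>Y\<in>P - {{}}. f (card (insert u Y) + Min (insert u Y))) = (\<Sum>Y\<in>P - {{}}. f (Suc (card Y + Min Y)))"
      using cins mins by (intro sum.cong) simp_all
    finally show ?thesis by simp
  qed
  have IH1: "(\<Sum>Y\<in>P. f (Suc (card Y))) = f (Suc u) + (\<Sum>Y\<in>P - {{}}. f (card Y + Min Y))"
    using Suc.IH[of f] unfolding P_def .
  have IH2: "(\<Sum>Y\<in>P. f (Suc (Suc (card Y)))) = f (Suc (Suc u)) + (\<Sum>Y\<in>P - {{}}. f (Suc (card Y + Min Y)))"
    using Suc.IH[of "\<lambda>x. f (Suc x)"] unfolding P_def by simp
  show ?case unfolding LHS RHS IH1 IH2 by simp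
qed

lemma step_UNIV: "(UNIV :: step set) = {South, West}"
  using step.exhaust by auto

lemma finite_B: "finite {t. is_typeB_tableau n t}"
proof -
  have "{t. is_typeB_tableau n t} \<subseteq> {w. set w \<subseteq> UNIV \<and> length w = n} \<times> Pow ({..<n} \<times> {..<n})"
  proof
    fix t assume "t \<in> {t. is_typeB_tableau n t}"
    then obtain w T where t: "t = (w, T)" and v: "valid n w T" by (cases t) auto
    have "T \<subseteq> {..<n} \<times> {..<n}"
    proof
      fix x assume "x \<in> T"
      then show "x \<in> {..<n} \<times> {..<n}" using valid_T[OF v, of "fst x" "snd x"] by (cases x) auto
    qed
    then show "t \<in> {w. set w \<subseteq> UNIV \<and> length w = n} \<times> Pow ({..<n} \<times> {..<n})"
      using t valid_len[OF v] by auto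
  qed
  moreover have "finite ({w. set w \<subseteq> (UNIV :: step set) \<and> length w = n} \<times> Pow ({..<n} \<times> {..<n}))"
  proof -
    have "finite (UNIV :: step set)" unfolding step_UNIV by (rule finite.insertI) simp
    then have "finite {w. set w \<subseteq> (UNIV :: step set) \<and> length w = n}" using finite_lists_length_eq by blast
    then show ?thesis by simp
  qed
  ultimately show ?thesis using finite_subset by blast
qed

lemma nonempty_B: "is_typeB_tableau n (replicate n South, {})"
  unfolding valid_def' by (auto simp: tcells_mem)

lemma fiber_base: "valid m w T \<Longrightarrow> {t. is_typeB_tableau m t \<and> trunc m t = (w, T)} = {(w, T)}"
proof -
  assume v: "valid m w T"
  have "is_typeB_tableau m t \<Longrightarrow> trunc m t = t" for t
    by (cases t) (simp add: trunc_id)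
  then show ?thesis using v trunc_id[OF v] by auto
qed

lemma trunc_valid': "is_typeB_tableau n t \<Longrightarrow> m \<le> n \<Longrightarrow> is_typeB_tableau m (trunc m t)"
  by (cases t) (simp add: trunc_valid)

lemma fiber_Q:
  assumes plain: "\<And>w1 T1. valid (Suc m) w1 T1 \<Longrightarrow>
      card {t. is_typeB_tableau (Suc m + j) t \<and> trunc (Suc m) t = (w1, T1)} = N j (card (elig w1 T1))"
    and v: "valid m w T"
  shows "card {t. is_typeB_tableau (Suc m + j) t \<and> trunc m t = (w, T) \<and> Q (trunc (Suc m) t)}
     = (\<Sum>t1\<in>ext1 w T. if Q t1 then N j (card (elig (fst t1) (snd t1))) else 0)"
proof -
  define I where "I = {t1 \<in> ext1 w T. Q t1}"
  define F where "F = (\<lambda>t1. {t. is_typeB_tableau (Suc m + j) t \<and> trunc (Suc m) t = t1})"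
  have fE: "finite (ext1 w T)" unfolding ext1_def using finite_elig by simp
  have fI: "finite I" unfolding I_def using fE by simp
  have eq: "{t. is_typeB_tableau (Suc m + j) t \<and> trunc m t = (w, T) \<and> Q (trunc (Suc m) t)} = \<Union>(F ` I)"
  proof
    show "{t. is_typeB_tableau (Suc m + j) t \<and> trunc m t = (w, T) \<and> Q (trunc (Suc m) t)} \<subseteq> \<Union>(F ` I)"
    proof
      fix t assume t: "t \<in> {t. is_typeB_tableau (Suc m + j) t \<and> trunc m t = (w, T) \<and> Q (trunc (Suc m) t)}"
      define t1 where "t1 = trunc (Suc m) t"
      have "is_typeB_tableau (Suc m) t1" unfolding t1_def using trunc_valid'[of "Suc m + j" t "Suc m"] t by simp
      moreover have "trunc m t1 = (w, T)" unfolding t1_def using trunc_trunc[of m "Suc m" t] t by simp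
      ultimately have "t1 \<in> ext1 w T" using ext1_complete[OF v] by blast
      then have "t1 \<in> I" unfolding I_def using t t1_def by simp
      moreover have "t \<in> F t1" unfolding F_def t1_def using t by simp
      ultimately show "t \<in> \<Union>(F ` I)" by blast
    qed
  next
    show "\<Union>(F ` I) \<subseteq> {t. is_typeB_tableau (Suc m + j) t \<and> trunc m t = (w, T) \<and> Q (trunc (Suc m) t)}"
    proof
      fix t assume "t \<in> \<Union>(F ` I)"
      then obtain t1 where t1: "t1 \<in> I" "t \<in> F t1" by blast
      have "trunc m t1 = (w, T)" using ext1_sub[OF v] t1(1) unfolding I_def by blast
      then have "trunc m t = (w, T)" using t1(2) trunc_trunc[of m "Suc m" t] unfolding F_def by simp
      then show "t \<in> {t. is_typeB_tableau (Suc m + j) t \<and> trunc m t = (w, T) \<and> Q (trunc (Suc m) t)}"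
        using t1 unfolding F_def I_def by simp
    qed
  qed
  have fF: "\<forall>i\<in>I. finite (F i)"
  proof
    fix i show "finite (F i)" unfolding F_def using finite_B[of "Suc m + j"] by (rule finite_subset[rotated]) blast
  qed
  have dF: "\<forall>i\<in>I. \<forall>i'\<in>I. i \<noteq> i' \<longrightarrow> F i \<inter> F i' = {}" unfolding F_def by blast
  have "card (\<Union>(F ` I)) = (\<Sum>i\<in>I. card (F i))" using card_UN_disjoint[OF fI fF dF] .
  also have "\<dots> = (\<Sum>i\<in>I. N j (card (elig (fst i) (snd i))))"
  proof (rule sum.cong[OF refl])
    fix i assume "i \<in> I"
    then have "is_typeB_tableau (Suc m) i" using ext1_sub[OF v] unfolding I_def by blast
    then have "valid (Suc m) (fst i) (snd i)" by simp
    then show "card (F i) = N j (card (elig (fst i) (snd i)))" using plain[of "fst i" "snd i"] unfolding F_def by simp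
  qed
  also have "\<dots> = (\<Sum>t1\<in>ext1 w T. if Q t1 then N j (card (elig (fst t1) (snd t1))) else 0)"
    unfolding I_def using sum.inter_filter[OF fE] by simp
  finally show ?thesis using eq by simp
qed

lemma elig_sums:
  assumes v: "valid m w T"
  shows "(\<Sum>X\<in>Pow (elig w T). f (card (elig (fst (extW w T True X)) (snd (extW w T True X)))))
       = (\<Sum>Y\<in>Pow {..<card (elig w T)}. f (Suc (card Y)))"
    and "(\<Sum>X\<in>Pow (elig w T) - {{}}. f (card (elig (fst (extW w T False X)) (snd (extW w T False X)))))
       = (\<Sum>Y\<in>Pow {..<card (elig w T)} - {{}}. f (card Y + Min Y))"
    and "card (elig (w @ [South]) T) = Suc (card (elig w T))"
proof -
  have L: "length w = m" using valid_len[OF v] .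
  have mE: "m \<notin> elig w T" using elig_less[of m w T] L by blast
  have "(\<Sum>X\<in>Pow (elig w T). f (card (elig (fst (extW w T True X)) (snd (extW w T True X)))))
      = (\<Sum>X\<in>Pow (elig w T). f (Suc (card X)))"
  proof (rule sum.cong[OF refl])
    fix X assume X: "X \<in> Pow (elig w T)"
    then have "X \<subseteq> elig w T" by simp
    moreover have "finite X" using X finite_elig finite_subset by blast
    moreover have "m \<notin> X" using mE X by blast
    ultimately show "f (card (elig (fst (extW w T True X)) (snd (extW w T True X)))) = f (Suc (card X))"
      using elig_extW[OF v, of X True] by simp
  qed
  then show "(\<Sum>X\<in>Pow (elig w T). f (card (elig (fst (extW w T True X)) (snd (extW w T True X)))))
       = (\<Sum>Y\<in>Pow {..<card (elig w T)}. f (Suc (card Y)))"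
    using transfer_sums(1)[OF v, of f] by simp
  have "(\<Sum>X\<in>Pow (elig w T) - {{}}. f (card (elig (fst (extW w T False X)) (snd (extW w T False X)))))
      = (\<Sum>X\<in>Pow (elig w T) - {{}}. f (card (X \<union> {r \<in> elig w T. \<forall>x\<in>X. \<not> row_above w x r})))"
  proof (rule sum.cong[OF refl])
    fix X assume X: "X \<in> Pow (elig w T) - {{}}"
    then have "X \<subseteq> elig w T" "X \<noteq> {}" by auto
    then show "f (card (elig (fst (extW w T False X)) (snd (extW w T False X)))) =
       f (card (X \<union> {r \<in> elig w T. \<forall>x\<in>X. \<not> row_above w x r}))"
      using elig_extW[OF v, of X False] by simp
  qed
  then show "(\<Sum>X\<in>Pow (elig w T) - {{}}. f (card (elig (fst (extW w T False X)) (snd (extW w T False X)))))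
       = (\<Sum>Y\<in>Pow {..<card (elig w T)} - {{}}. f (card Y + Min Y))"
    using transfer_sums(2)[OF v, of f] by simp
  show "card (elig (w @ [South]) T) = Suc (card (elig w T))"
    using elig_extS[OF v] mE finite_elig[of w T] by simp
qed

lemma plain:
  "valid m w T \<Longrightarrow> card {t. is_typeB_tableau (m + j) t \<and> trunc m t = (w, T)} = N j (card (elig w T))"
proof (induction j arbitrary: m w T)
  case 0
  then show ?case using fiber_base[OF 0] by simp
next
  case (Suc j)
  have v: "valid m w T" by fact
  have "{t. is_typeB_tableau (m + Suc j) t \<and> trunc m t = (w, T)}
      = {t. is_typeB_tableau (Suc m + j) t \<and> trunc m t = (w, T) \<and> (\<lambda>_. True) (trunc (Suc m) t)}" by simp
  then have "card {t. is_typeB_tableau (m + Suc j) t \<and> trunc m t = (w, T)}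
     = (\<Sum>t1\<in>ext1 w T. if (\<lambda>_. True) t1 then N j (card (elig (fst t1) (snd t1))) else 0)"
    using fiber_Q[OF Suc.IH v, of "\<lambda>_. True"] by simp
  also have "\<dots> = (\<Sum>t1\<in>ext1 w T. N j (card (elig (fst t1) (snd t1))))" by simp
  also have "\<dots> = N j (card (elig (w @ [South]) T))
      + (\<Sum>X\<in>Pow (elig w T). N j (card (elig (fst (extW w T True X)) (snd (extW w T True X)))))
      + (\<Sum>X\<in>Pow (elig w T) - {{}}. N j (card (elig (fst (extW w T False X)) (snd (extW w T False X)))))"
    using ext1_sum[OF v, of "\<lambda>t1. N j (card (elig (fst t1) (snd t1)))"] by simp
  also have "\<dots> = N (Suc j) (card (elig w T))"
    using elig_sums(1,2)[OF v, of "N j"] elig_sums(3)[OF v] by simp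
  finally show ?case .
qed



lemma partition_count:
  "card {t. is_typeB_tableau (Suc p + j) t \<and> Q (trunc (Suc p) t)} =
   (\<Sum>t0\<in>{t0. is_typeB_tableau p t0}. card {t. is_typeB_tableau (Suc p + j) t \<and> trunc p t = t0 \<and> Q (trunc (Suc p) t)})"
proof -
  define F where "F = (\<lambda>t0. {t. is_typeB_tableau (Suc p + j) t \<and> trunc p t = t0 \<and> Q (trunc (Suc p) t)})"
  define I where "I = {t0. is_typeB_tableau p t0}"
  have fI: "finite I" unfolding I_def by (rule finite_B)
  have fF: "\<forall>i\<in>I. finite (F i)"
  proof
    fix i show "finite (F i)" unfolding F_def using finite_B[of "Suc p + j"] by (rule finite_subset[rotated]) blast
  qed
  have dF: "\<forall>i\<in>I. \<forall>i'\<in>I. i \<noteq> i' \<longrightarrow> F i \<inter> F i' = {}" unfolding F_def by blast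
  have eq: "{t. is_typeB_tableau (Suc p + j) t \<and> Q (trunc (Suc p) t)} = \<Union>(F ` I)"
  proof
    show "{t. is_typeB_tableau (Suc p + j) t \<and> Q (trunc (Suc p) t)} \<subseteq> \<Union>(F ` I)"
    proof
      fix t assume t: "t \<in> {t. is_typeB_tableau (Suc p + j) t \<and> Q (trunc (Suc p) t)}"
      then have "trunc p t \<in> I" unfolding I_def using trunc_valid'[of "Suc p + j" t p] by simp
      moreover have "t \<in> F (trunc p t)" unfolding F_def using t by simp
      ultimately show "t \<in> \<Union>(F ` I)" by blast
    qed
    show "\<Union>(F ` I) \<subseteq> {t. is_typeB_tableau (Suc p + j) t \<and> Q (trunc (Suc p) t)}"
      unfolding F_def by blast
  qed
  show ?thesis unfolding eq card_UN_disjoint[OF fI fF dF] unfolding F_def I_def ..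
qed

definition Ev :: "nat \<Rightarrow> step list \<times> (nat \<times> nat) set \<Rightarrow> bool" where
  "Ev p t \<longleftrightarrow> fst t ! p = West \<and> (p, p) \<in> snd t"

lemma Ev_trunc: "p < n \<Longrightarrow> Ev p (trunc (Suc p) t) \<longleftrightarrow> Ev p t"
  unfolding Ev_def trunc_def by simp

lemma fiber_Ev:
  assumes v: "valid p w T"
  shows "card {t. is_typeB_tableau (Suc p + j) t \<and> trunc p t = (w, T) \<and> Ev p (trunc (Suc p) t)}
       = card {t. is_typeB_tableau (Suc p + j) t \<and> trunc p t = (w, T) \<and> \<not> Ev p (trunc (Suc p) t)}"
proof -
  have L: "length w = p" using valid_len[OF v] .
  have pl: "\<And>w1 T1. valid (Suc p) w1 T1 \<Longrightarrow>
      card {t. is_typeB_tableau (Suc p + j) t \<and> trunc (Suc p) t = (w1, T1)} = N j (card (elig w1 T1))"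
    using plain by blast
  define U where "U = (\<lambda>t1. N j (card (elig (fst t1) (snd t1))))"
  have evS: "\<not> Ev p (w @ [South], T)" unfolding Ev_def using L by (simp add: nth_append)
  have evT: "X \<in> Pow (elig w T) \<Longrightarrow> Ev p (extW w T True X)" for X
    unfolding Ev_def using extW_col(2)[OF v, of X True] L by (simp add: extW_def nth_append)
  have evF: "X \<in> Pow (elig w T) - {{}} \<Longrightarrow> \<not> Ev p (extW w T False X)" for X
    unfolding Ev_def using extW_col(2)[OF v, of X False] by simp
  have "card {t. is_typeB_tableau (Suc p + j) t \<and> trunc p t = (w, T) \<and> Ev p (trunc (Suc p) t)}
      = (\<Sum>t1\<in>ext1 w T. if Ev p t1 then U t1 else 0)"
    using fiber_Q[OF pl v, of "Ev p"] unfolding U_def by simp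
  also have "\<dots> = (\<Sum>X\<in>Pow (elig w T). U (extW w T True X))"
  proof -
    have "(\<Sum>X\<in>Pow (elig w T). if Ev p (extW w T True X) then U (extW w T True X) else 0)
        = (\<Sum>X\<in>Pow (elig w T). U (extW w T True X))" using evT by (intro sum.cong) simp_all
    moreover have "(\<Sum>X\<in>Pow (elig w T) - {{}}. if Ev p (extW w T False X) then U (extW w T False X) else 0) = 0"
      using evF by (intro sum.neutral) simp
    ultimately show ?thesis using ext1_sum[OF v, of "\<lambda>t1. if Ev p t1 then U t1 else 0"] evS by simp
  qed
  also have "\<dots> = (\<Sum>Y\<in>Pow {..<card (elig w T)}. N j (Suc (card Y)))"
    unfolding U_def using elig_sums(1)[OF v, of "N j"] by simp
  finally have A: "card {t. is_typeB_tableau (Suc p + j) t \<and> trunc p t = (w, T) \<and> Ev p (trunc (Suc p) t)}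
      = (\<Sum>Y\<in>Pow {..<card (elig w T)}. N j (Suc (card Y)))" .
  have "card {t. is_typeB_tableau (Suc p + j) t \<and> trunc p t = (w, T) \<and> \<not> Ev p (trunc (Suc p) t)}
      = (\<Sum>t1\<in>ext1 w T. if \<not> Ev p t1 then U t1 else 0)"
    using fiber_Q[OF pl v, of "\<lambda>t. \<not> Ev p t"] unfolding U_def by simp
  also have "\<dots> = U (w @ [South], T) + (\<Sum>X\<in>Pow (elig w T) - {{}}. U (extW w T False X))"
  proof -
    have "(\<Sum>X\<in>Pow (elig w T) - {{}}. if \<not> Ev p (extW w T False X) then U (extW w T False X) else 0)
        = (\<Sum>X\<in>Pow (elig w T) - {{}}. U (extW w T False X))" using evF by (intro sum.cong) simp_all
    moreover have "(\<Sum>X\<in>Pow (elig w T). if \<not> Ev p (extW w T True X) then U (extW w T True X) else 0) = 0"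
      using evT by (intro sum.neutral) simp
    ultimately show ?thesis using ext1_sum[OF v, of "\<lambda>t1. if \<not> Ev p t1 then U t1 else 0"] evS by simp
  qed
  also have "\<dots> = N j (Suc (card (elig w T))) + (\<Sum>Y\<in>Pow {..<card (elig w T)} - {{}}. N j (card Y + Min Y))"
    unfolding U_def using elig_sums(2)[OF v, of "N j"] elig_sums(3)[OF v] by simp
  finally have B: "card {t. is_typeB_tableau (Suc p + j) t \<and> trunc p t = (w, T) \<and> \<not> Ev p (trunc (Suc p) t)}
      = N j (Suc (card (elig w T))) + (\<Sum>Y\<in>Pow {..<card (elig w T)} - {{}}. N j (card Y + Min Y))" .
  show ?thesis unfolding A B using ident[of "N j"] .
qed

lemma count_equal:
  "card {t. is_typeB_tableau (Suc p + j) t \<and> Ev p t} = card {t. is_typeB_tableau (Suc p + j) t \<and> \<not> Ev p t}"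
proof -
  have e1: "{t. is_typeB_tableau (Suc p + j) t \<and> Ev p t} = {t. is_typeB_tableau (Suc p + j) t \<and> Ev p (trunc (Suc p) t)}"
    using Ev_trunc[of p "Suc p + j"] by auto
  have e2: "{t. is_typeB_tableau (Suc p + j) t \<and> \<not> Ev p t} = {t. is_typeB_tableau (Suc p + j) t \<and> \<not> Ev p (trunc (Suc p) t)}"
    using Ev_trunc[of p "Suc p + j"] by auto
  have "\<And>t0. t0 \<in> {t0. is_typeB_tableau p t0} \<Longrightarrow>
     card {t. is_typeB_tableau (Suc p + j) t \<and> trunc p t = t0 \<and> Ev p (trunc (Suc p) t)}
     = card {t. is_typeB_tableau (Suc p + j) t \<and> trunc p t = t0 \<and> \<not> Ev p (trunc (Suc p) t)}"
  proof -
    fix t0 assume "t0 \<in> {t0. is_typeB_tableau p t0}"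
    then obtain w T where "t0 = (w, T)" "valid p w T" by (cases t0) auto
    then show "card {t. is_typeB_tableau (Suc p + j) t \<and> trunc p t = t0 \<and> Ev p (trunc (Suc p) t)}
     = card {t. is_typeB_tableau (Suc p + j) t \<and> trunc p t = t0 \<and> \<not> Ev p (trunc (Suc p) t)}"
      using fiber_Ev by simp
  qed
  then show ?thesis unfolding e1 e2 partition_count[of p j "Ev p"] partition_count[of p j "\<lambda>t. \<not> Ev p t"]
    by (rule sum.cong[OF refl])
qed

theorem mainTheorem6:
  fixes n k :: nat
  assumes "1 \<le> k" and "k \<le> n"
  shows "measure_pmf.prob (PB n)
           {t. fst t ! (k - 1) = West \<and> (k - 1, k - 1) \<in> snd t} = 1 / 2"
proof -
  define p where "p = k - 1"
  define j where "j = n - k"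
  have n: "n = Suc p + j" using assms unfolding p_def j_def by simp
  define B where "B = typeB_tableaux n"
  have Bd: "B = {t. is_typeB_tableau n t}" unfolding B_def typeB_tableaux_def by simp
  have fB: "finite B" unfolding Bd by (rule finite_B)
  have neB: "B \<noteq> {}" unfolding Bd using nonempty_B[of n] by blast
  have S: "{t. fst t ! (k - 1) = West \<and> (k - 1, k - 1) \<in> snd t} = {t. Ev p t}"
    unfolding Ev_def p_def by simp
  have c: "card {t \<in> B. Ev p t} = card {t \<in> B. \<not> Ev p t}"
    using count_equal[of p j] unfolding Bd n by simp
  have "card B = card {t \<in> B. Ev p t} + card {t \<in> B. \<not> Ev p t}"
  proof -
    have "B = {t \<in> B. Ev p t} \<union> {t \<in> B. \<not> Ev p t}" by blast
    moreover have "{t \<in> B. Ev p t} \<inter> {t \<in> B. \<not> Ev p t} = {}" by blast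
    ultimately show ?thesis using fB card_Un_disjoint[of "{t \<in> B. Ev p t}" "{t \<in> B. \<not> Ev p t}"] by simp
  qed
  then have cB: "card B = 2 * card {t \<in> B. Ev p t}" using c by simp
  have pos: "card B > 0" using fB neB by (simp add: card_gt_0_iff)
  have "measure_pmf.prob (PB n) {t. Ev p t} = card (B \<inter> {t. Ev p t}) / card B"
    unfolding PB_def B_def[symmetric] using measure_pmf_of_set[OF neB fB] by simp
  also have "B \<inter> {t. Ev p t} = {t \<in> B. Ev p t}" by blast
  finally have "measure_pmf.prob (PB n) {t. Ev p t} = card {t \<in> B. Ev p t} / card B" .
  also have "\<dots> = 1 / 2" using cB pos by simp
  finally show ?thesis unfolding S .
qed


end
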